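(* Let $f(x_0,x_1,x_2,x_3)=(x_0^2+x_1^2-x_2^2-x_3^2)x_3$ on $\mathbb{R}^4$. Then the index cone of $f$ is nonempty, and the 3-manifold $M=\{f=1\}$ inside the index cone, with the Riemannian metric given by restricting $-\frac{1}{6}\,\partial^2 f/\partial x_i\partial x_j$, has positive sectional curvature on some 2-plane at every point.
   Context: For a real form $f$ of degree $d$ on $\mathbb{R}^n$, the index cone is the set of points $x$ where $f(x)>0$ and the Hessian matrix $(\partial^2 f/\partial x_i\partial x_j)(x)$ has signature $(1,n-1)$. On the hypersurface $\{f=1\}$ in the index cone, the restriction of $-\frac{1}{d(d-1)}\partial^2 f/\partial x_i\partial x_j$ is a Riemannian metric (here $d=3$). *)

theory Defs
  imports "HOL-Analysis.Analysis"
begin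

definition partial :: "(real^'n \<Rightarrow> real) \<Rightarrow> 'n \<Rightarrow> real^'n \<Rightarrow> real" where
  "partial F i x = deriv (\<lambda>t. F (x + t *\<^sub>R axis i 1)) 0"

fun ipartial :: "'n list \<Rightarrow> (real^'n \<Rightarrow> real) \<Rightarrow> real^'n \<Rightarrow> real" where
  "ipartial [] F = F"
| "ipartial (i # is) F = partial (ipartial is F) i"

definition smooth_on :: "(real^'n) set \<Rightarrow> (real^'n \<Rightarrow> real) \<Rightarrow> bool" where
  "smooth_on U F \<longleftrightarrow> open U \<and>
     (\<forall>is. continuous_on U (ipartial is F) \<and>
        (\<forall>i. \<forall>x\<in>U. (\<lambda>t. ipartial is F (x + t *\<^sub>R axis i 1)) differentiable (at 0)))"

definition hessian :: "(real^'n \<Rightarrow> real) \<Rightarrow> real^'n \<Rightarrow> real^'n^'n" where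
  "hessian f x = (\<chi> i j. partial (partial f j) i x)"

definition quad_form :: "real^'n^'n \<Rightarrow> real^'n \<Rightarrow> real" where
  "quad_form A v = v \<bullet> (A *v v)"

definition pos_index :: "real^'n^'n \<Rightarrow> nat \<Rightarrow> bool" where
  "pos_index A p \<longleftrightarrow>
     (\<exists>V. subspace V \<and> dim V = p \<and> (\<forall>v\<in>V. v \<noteq> 0 \<longrightarrow> quad_form A v > 0)) \<and>
     (\<forall>V. subspace V \<and> (\<forall>v\<in>V. v \<noteq> 0 \<longrightarrow> quad_form A v > 0) \<longrightarrow> dim V \<le> p)"

definition has_signature :: "real^'n^'n \<Rightarrow> nat \<Rightarrow> nat \<Rightarrow> bool" where
  "has_signature A p q \<longleftrightarrow> pos_index A p \<and> pos_index (- A) q"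

definition index_cone :: "(real^'n \<Rightarrow> real) \<Rightarrow> (real^'n) set" where
  "index_cone f = {x. f x > 0 \<and> has_signature (hessian f x) 1 (CARD('n) - 1)}"

definition jac :: "(real^'m \<Rightarrow> real^'n) \<Rightarrow> 'n \<Rightarrow> 'm \<Rightarrow> real^'m \<Rightarrow> real" where
  "jac \<phi> k i u = partial (\<lambda>u. \<phi> u $ k) i u"

definition local_param :: "(real^'n) set \<Rightarrow> (real^'m) set \<Rightarrow> (real^'m \<Rightarrow> real^'n) \<Rightarrow> bool" where
  "local_param M U \<phi> \<longleftrightarrow> open U \<and> (\<forall>k. smooth_on U (\<lambda>u. \<phi> u $ k)) \<and>
     \<phi> ` U \<subseteq> M \<and> inj_on \<phi> U \<and> (\<exists>W. open W \<and> \<phi> ` U = W \<inter> M) \<and>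
     (\<forall>u\<in>U. \<forall>v. (\<Sum>i\<in>UNIV. (v $ i) *\<^sub>R (\<chi> k. jac \<phi> k i u)) = 0 \<longrightarrow> v = 0)"

definition gmet :: "nat \<Rightarrow> (real^'n \<Rightarrow> real) \<Rightarrow> (real^'m \<Rightarrow> real^'n) \<Rightarrow> 'm \<Rightarrow> 'm \<Rightarrow> real^'m \<Rightarrow> real" where
  "gmet d f \<phi> i j u = - (1 / (real d * (real d - 1))) *
     (\<Sum>k\<in>UNIV. \<Sum>l\<in>UNIV. hessian f (\<phi> u) $ k $ l * jac \<phi> k i u * jac \<phi> l j u)"

definition ginv :: "nat \<Rightarrow> (real^'n \<Rightarrow> real) \<Rightarrow> (real^'m \<Rightarrow> real^'n) \<Rightarrow> real^'m \<Rightarrow> real^'m^'m" where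
  "ginv d f \<phi> u = matrix_inv (\<chi> i j. gmet d f \<phi> i j u)"

definition christoffel :: "nat \<Rightarrow> (real^'n \<Rightarrow> real) \<Rightarrow> (real^'m \<Rightarrow> real^'n) \<Rightarrow> 'm \<Rightarrow> 'm \<Rightarrow> 'm \<Rightarrow> real^'m \<Rightarrow> real" where
  "christoffel d f \<phi> k i j u = (1/2) * (\<Sum>l\<in>UNIV. ginv d f \<phi> u $ k $ l *
      (partial (gmet d f \<phi> j l) i u + partial (gmet d f \<phi> i l) j u - partial (gmet d f \<phi> i j) l u))"

text \<open>Riemann tensor R^m_ijk, with R(d_i,d_j)d_k = R^m_ijk d_m and
  R(X,Y)Z = nabla_X nabla_Y Z - nabla_Y nabla_X Z - nabla_[X,Y] Z.\<close>
definition riemann :: "nat \<Rightarrow> (real^'n \<Rightarrow> real) \<Rightarrow> (real^'m \<Rightarrow> real^'n) \<Rightarrow> 'm \<Rightarrow> 'm \<Rightarrow> 'm \<Rightarrow> 'm \<Rightarrow> real^'m \<Rightarrow> real" where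
  "riemann d f \<phi> m i j k u =
     partial (christoffel d f \<phi> m j k) i u - partial (christoffel d f \<phi> m i k) j u
     + (\<Sum>p\<in>UNIV. christoffel d f \<phi> m i p u * christoffel d f \<phi> p j k u
                 - christoffel d f \<phi> m j p u * christoffel d f \<phi> p i k u)"

definition ginner :: "nat \<Rightarrow> (real^'n \<Rightarrow> real) \<Rightarrow> (real^'m \<Rightarrow> real^'n) \<Rightarrow> real^'m \<Rightarrow> real^'m \<Rightarrow> real^'m \<Rightarrow> real" where
  "ginner d f \<phi> u a b = (\<Sum>i\<in>UNIV. \<Sum>j\<in>UNIV. gmet d f \<phi> i j u * a $ i * b $ j)"

definition sectional_curv :: "nat \<Rightarrow> (real^'n \<Rightarrow> real) \<Rightarrow> (real^'m \<Rightarrow> real^'n) \<Rightarrow> real^'m \<Rightarrow> real^'m \<Rightarrow> real^'m \<Rightarrow> real" where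
  "sectional_curv d f \<phi> u a b =
     (\<Sum>i\<in>UNIV. \<Sum>j\<in>UNIV. \<Sum>k\<in>UNIV. \<Sum>l\<in>UNIV. \<Sum>m\<in>UNIV.
        a $ i * b $ j * b $ k * a $ l * gmet d f \<phi> l m u * riemann d f \<phi> m i j k u)
     / (ginner d f \<phi> u a a * ginner d f \<phi> u b b - (ginner d f \<phi> u a b)^2)"

definition f5 :: "real^4 \<Rightarrow> real" where
  "f5 x = ((x $ 0)^2 + (x $ 1)^2 - (x $ 2)^2 - (x $ 3)^2) * x $ 3"

definition M5 :: "(real^4) set" where
  "M5 = {x \<in> index_cone f5. f5 x = 1}"

end

theory Submission
  imports Defs
begin


lemma sum3: "(\<Sum>i\<in>(UNIV::3 set). f i) = f 0 + f 1 + f 2"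
proof -
  have h: "(3::3) = 0" by simp
  show ?thesis unfolding sum_3 h by (simp add: add_ac)
qed

lemma sum4: "(\<Sum>i\<in>(UNIV::4 set). f i) = f 0 + f 1 + f 2 + f 3"
proof -
  have h: "(4::4) = 0" by simp
  show ?thesis unfolding sum_4 h by (simp add: add_ac)
qed

lemma cases3: fixes i :: 3 obtains "i = 0" | "i = 1" | "i = 2"
proof -
  have "(3::3) = 0" by simp
  then show ?thesis using exhaust_3[of i] that by auto
qed

lemma cases4: fixes i :: 4 obtains "i = 0" | "i = 1" | "i = 2" | "i = 3"
proof -
  have "(4::4) = 0" by simp
  then show ?thesis using exhaust_4[of i] that by auto
qed

lemma line_upd: "x + t *\<^sub>R axis k 1 = (\<chi> m. if m = k then x$k + t else x$m)"
  by (simp add: vec_eq_iff axis_def)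

lemma line_deriv_upd:
  fixes F :: "real^'n \<Rightarrow> real"
  assumes "((\<lambda>s. F (\<chi> m. if m = k then s else x$m)) has_real_derivative D) (at (x$k))"
  shows "((\<lambda>t. F (x + t *\<^sub>R axis k 1)) has_real_derivative D) (at 0)"
proof -
  have e: "(\<lambda>t. F (x + t *\<^sub>R axis k 1)) = (\<lambda>s. F (\<chi> m. if m = k then s else x$m)) \<circ> (\<lambda>t. x$k + t)"
    by (rule ext) (simp add: line_upd)
  have d: "((\<lambda>t. x$k + t) has_real_derivative 1) (at 0)" by (auto intro!: derivative_eq_intros)
  have "((\<lambda>s. F (\<chi> m. if m = k then s else x$m)) has_real_derivative D) (at (x$k + 0))"
    using assms by simp
  from DERIV_chain[OF this d] show ?thesis unfolding e by simp
qed

lemma partial_upd: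
  fixes F :: "real^'n \<Rightarrow> real"
  assumes "((\<lambda>s. F (\<chi> m. if m = k then s else x$m)) has_real_derivative D) (at (x$k))"
  shows "partial F k x = D"
  unfolding partial_def using line_deriv_upd[OF assms] by (rule DERIV_imp_deriv)

lemma ev_line:
  fixes x :: "real^'n"
  assumes "open U" "x \<in> U"
  shows "eventually (\<lambda>t::real. x + t *\<^sub>R v \<in> U) (nhds 0)"
proof -
  have "open ((\<lambda>t::real. x + t *\<^sub>R v) -` U)"
    by (rule open_vimage[OF assms(1)]) (intro continuous_intros)
  from eventually_nhds_in_open[OF this] show ?thesis using assms(2) by simp
qed

lemma partial_local:
  assumes "open U" "x \<in> U" "\<forall>y\<in>U. F y = G y"
  shows "partial F i x = partial G i x"
  unfolding partial_def
  by (rule deriv_cong_ev[OF eventually_mono[OF ev_line[OF assms(1,2)]]]) (use assms(3) in auto)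



inductive_set sm :: "(real^'n) set \<Rightarrow> (real^'n \<Rightarrow> real) set" for U where
  sm_const: "(\<lambda>u. k) \<in> sm U"
| sm_coord: "(\<lambda>u. u $ j) \<in> sm U"
| sm_add: "F \<in> sm U \<Longrightarrow> G \<in> sm U \<Longrightarrow> (\<lambda>u. F u + G u) \<in> sm U"
| sm_mult: "F \<in> sm U \<Longrightarrow> G \<in> sm U \<Longrightarrow> (\<lambda>u. F u * G u) \<in> sm U"
| sm_inv: "F \<in> sm U \<Longrightarrow> (\<forall>u\<in>U. F u \<noteq> 0) \<Longrightarrow> (\<lambda>u. inverse (F u)) \<in> sm U"
| sm_sqrt: "F \<in> sm U \<Longrightarrow> (\<forall>u\<in>U. F u > 0) \<Longrightarrow> (\<lambda>u. sqrt (F u)) \<in> sm U"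

lemma sm_props:
  assumes "F \<in> sm U"
  shows "continuous_on U F \<and>
    (\<forall>i. \<exists>G\<in>sm U. \<forall>x\<in>U. ((\<lambda>t. F (x + t *\<^sub>R axis i 1)) has_real_derivative G x) (at 0))"
  using assms
proof (induction rule: sm.induct)
  case (sm_const k)
  show ?case by (auto intro!: bexI[of _ "\<lambda>u. 0"] sm.intros derivative_eq_intros continuous_intros)
next
  case (sm_coord j)
  show ?case
  proof (intro conjI allI)
    show "continuous_on U (\<lambda>u. u $ j)" by (intro continuous_intros)
    fix i
    show "\<exists>G\<in>sm U. \<forall>x\<in>U. ((\<lambda>t. (x + t *\<^sub>R axis i 1) $ j) has_real_derivative G x) (at 0)"
      by (rule bexI[of _ "\<lambda>u. (if j = i then 1 else 0)"])
         (auto simp: axis_def intro!: derivative_eq_intros sm.intros)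
  qed
next
  case (sm_add F G)
  show ?case
  proof (intro conjI allI)
    show "continuous_on U (\<lambda>u. F u + G u)" using sm_add by (intro continuous_intros) auto
    fix i
    obtain F' G' where F': "F' \<in> sm U" "\<forall>x\<in>U. ((\<lambda>t. F (x + t *\<^sub>R axis i 1)) has_real_derivative F' x) (at 0)"
      and G': "G' \<in> sm U" "\<forall>x\<in>U. ((\<lambda>t. G (x + t *\<^sub>R axis i 1)) has_real_derivative G' x) (at 0)"
      using sm_add by blast
    show "\<exists>H\<in>sm U. \<forall>x\<in>U. ((\<lambda>t. F (x + t *\<^sub>R axis i 1) + G (x + t *\<^sub>R axis i 1)) has_real_derivative H x) (at 0)"
      by (rule bexI[of _ "\<lambda>u. F' u + G' u"]) (use F' G' in \<open>auto intro!: derivative_eq_intros sm.intros\<close>)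
  qed
next
  case (sm_mult F G)
  show ?case
  proof (intro conjI allI)
    show "continuous_on U (\<lambda>u. F u * G u)" using sm_mult by (intro continuous_intros) auto
    fix i
    obtain F' G' where F': "F' \<in> sm U" "\<forall>x\<in>U. ((\<lambda>t. F (x + t *\<^sub>R axis i 1)) has_real_derivative F' x) (at 0)"
      and G': "G' \<in> sm U" "\<forall>x\<in>U. ((\<lambda>t. G (x + t *\<^sub>R axis i 1)) has_real_derivative G' x) (at 0)"
      using sm_mult by blast
    show "\<exists>H\<in>sm U. \<forall>x\<in>U. ((\<lambda>t. F (x + t *\<^sub>R axis i 1) * G (x + t *\<^sub>R axis i 1)) has_real_derivative H x) (at 0)"
      by (rule bexI[of _ "\<lambda>u. F' u * G u + F u * G' u"]) 
        (use F' G' sm_mult in \<open>auto intro!: derivative_eq_intros sm.intros\<close>)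
  qed
next
  case (sm_inv F)
  show ?case
  proof (intro conjI allI)
    show "continuous_on U (\<lambda>u. inverse (F u))" using sm_inv by (intro continuous_intros) auto
    fix i
    obtain F' where F': "F' \<in> sm U" "\<forall>x\<in>U. ((\<lambda>t. F (x + t *\<^sub>R axis i 1)) has_real_derivative F' x) (at 0)"
      using sm_inv by blast
    have inv: "(\<lambda>u. inverse (F u)) \<in> sm U" using sm_inv by (intro sm.intros) auto
    show "\<exists>H\<in>sm U. \<forall>x\<in>U. ((\<lambda>t. inverse (F (x + t *\<^sub>R axis i 1))) has_real_derivative H x) (at 0)"
    proof (rule bexI[of _ "\<lambda>u. (-1) * (F' u * (inverse (F u) * inverse (F u)))"], intro ballI)
      fix x assume x: "x \<in> U"
      have "((\<lambda>t. inverse (F (x + t *\<^sub>R axis i 1))) has_real_derivative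
          - (F' x * inverse (F (x + 0 *\<^sub>R axis i 1) ^ Suc (Suc 0)))) (at 0)"
        by (rule DERIV_inverse_fun) (use F' x sm_inv in auto)
      then show "((\<lambda>t. inverse (F (x + t *\<^sub>R axis i 1))) has_real_derivative
          (-1) * (F' x * (inverse (F x) * inverse (F x)))) (at 0)"
        by (simp add: power2_eq_square)
    qed (use sm_mult[OF sm_const[of "-1"] sm_mult[OF F'(1) sm_mult[OF inv inv]]] in simp)
  qed
next
  case (sm_sqrt F)
  show ?case
  proof (intro conjI allI)
    show "continuous_on U (\<lambda>u. sqrt (F u))" using sm_sqrt by (intro continuous_intros) auto
    fix i
    obtain F' where F': "F' \<in> sm U" "\<forall>x\<in>U. ((\<lambda>t. F (x + t *\<^sub>R axis i 1)) has_real_derivative F' x) (at 0)"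
      using sm_sqrt by blast
    have s: "(\<lambda>u. sqrt (F u)) \<in> sm U" using sm_sqrt by (intro sm.intros) auto
    have inv: "(\<lambda>u. inverse (2 * sqrt (F u))) \<in> sm U" using sm_sqrt s
      by (intro sm.intros) auto
    show "\<exists>H\<in>sm U. \<forall>x\<in>U. ((\<lambda>t. sqrt (F (x + t *\<^sub>R axis i 1))) has_real_derivative H x) (at 0)"
    proof (rule bexI[of _ "\<lambda>u. F' u * inverse (2 * sqrt (F u))"], intro ballI)
      fix x assume x: "x \<in> U"
      have p: "F (x + 0 *\<^sub>R axis i 1) > 0" using x sm_sqrt by simp
      have "((\<lambda>t. sqrt (F (x + t *\<^sub>R axis i 1))) has_real_derivative
          inverse (sqrt (F (x + 0 *\<^sub>R axis i 1))) / 2 * F' x) (at 0)"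
        by (rule DERIV_chain2[where g="\<lambda>t. F (x + t *\<^sub>R axis i 1)", OF DERIV_real_sqrt[OF p]]) (use F' x in auto)
      then show "((\<lambda>t. sqrt (F (x + t *\<^sub>R axis i 1))) has_real_derivative
          F' x * inverse (2 * sqrt (F x))) (at 0)"
        by (simp add: field_simps)
    qed (use sm_mult[OF F'(1) inv] in \<open>simp only:\<close>)
  qed
qed

lemma sm_ipartial:
  assumes "open U" "F \<in> sm U"
  shows "\<exists>G\<in>sm U. \<forall>x\<in>U. ipartial is F x = G x"
proof (induction "is")
  case Nil
  then show ?case using assms by auto
next
  case (Cons i "is")
  then obtain G where G: "G \<in> sm U" "\<forall>x\<in>U. ipartial is F x = G x" by blast
  obtain G' where G': "G' \<in> sm U" "\<forall>x\<in>U. ((\<lambda>t. G (x + t *\<^sub>R axis i 1)) has_real_derivative G' x) (at 0)"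
    using sm_props[OF G(1)] by blast
  have "\<forall>x\<in>U. ipartial (i # is) F x = G' x"
  proof
    fix x assume x: "x \<in> U"
    have "ipartial (i # is) F x = partial G i x"
      using partial_local[OF assms(1) x G(2)] by simp
    also have "\<dots> = G' x" unfolding partial_def using G'(2) x by (simp add: DERIV_imp_deriv)
    finally show "ipartial (i # is) F x = G' x" .
  qed
  then show ?case using G' by blast
qed

lemma sm_smooth:
  assumes "open U" "F \<in> sm U"
  shows "smooth_on U F"
  unfolding smooth_on_def
proof (intro conjI allI ballI assms(1))
  fix "is"
  obtain G where G: "G \<in> sm U" "\<forall>x\<in>U. ipartial is F x = G x" using sm_ipartial[OF assms] by blast
  show "continuous_on U (ipartial is F)"
    using continuous_on_cong[of U U "ipartial is F" G] sm_props[OF G(1)] G(2) by auto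
  fix i x assume x: "x \<in> U"
  obtain G' where G': "\<forall>x\<in>U. ((\<lambda>t. G (x + t *\<^sub>R axis i 1)) has_real_derivative G' x) (at 0)"
    using sm_props[OF G(1)] by blast
  have ev: "eventually (\<lambda>t. ipartial is F (x + t *\<^sub>R axis i 1) = G (x + t *\<^sub>R axis i 1)) (nhds 0)"
    using eventually_mono[OF ev_line[OF assms(1) x]] G(2) by fastforce
  have "((\<lambda>t. ipartial is F (x + t *\<^sub>R axis i 1)) has_real_derivative G' x) (at 0)"
    using DERIV_cong_ev[OF refl ev refl] G' x by simp
  then show "(\<lambda>t. ipartial is F (x + t *\<^sub>R axis i 1)) differentiable at 0"
    using real_differentiable_def by blast
qed



definition df5 :: "4 \<Rightarrow> real^4 \<Rightarrow> real" where
  "df5 j x = (if j = 0 then 2 * x$0 * x$3 else if j = 1 then 2 * x$1 * x$3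
     else if j = 2 then - 2 * x$2 * x$3 else (x$0)^2 + (x$1)^2 - (x$2)^2 - 3 * (x$3)^2)"

lemma partial_f5: "partial f5 j x = df5 j x"
proof (cases j rule: cases4)
  case 1 then show ?thesis
    by (intro partial_upd) (auto simp: f5_def df5_def intro!: derivative_eq_intros)
next
  case 2 then show ?thesis
    by (intro partial_upd) (auto simp: f5_def df5_def intro!: derivative_eq_intros)
next
  case 3 then show ?thesis
    by (intro partial_upd) (auto simp: f5_def df5_def intro!: derivative_eq_intros)
next
  case 4 then show ?thesis
    by (intro partial_upd) (auto simp: f5_def df5_def intro!: derivative_eq_intros simp: algebra_simps power2_eq_square)
qed

definition hf :: "4 \<Rightarrow> 4 \<Rightarrow> real^4 \<Rightarrow> real" where
  "hf i j x = (if i = 3 \<and> j = 3 then - 6 * x$3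
     else if i = 3 then (if j = 0 then 2 * x$0 else if j = 1 then 2 * x$1 else - 2 * x$2)
     else if j = 3 then (if i = 0 then 2 * x$0 else if i = 1 then 2 * x$1 else - 2 * x$2)
     else if i = j then (if i = 2 then - 2 * x$3 else 2 * x$3) else 0)"

lemma partial_df5: "partial (df5 j) i x = hf i j x"
  by (cases j rule: cases4; cases i rule: cases4; intro partial_upd;
      auto simp: df5_def hf_def intro!: derivative_eq_intros)

lemma hessian_f5: "hessian f5 x = (\<chi> i j. hf i j x)"
proof -
  have "partial f5 j = df5 j" for j by (rule ext) (rule partial_f5)
  then show ?thesis unfolding hessian_def by (simp add: partial_df5)
qed

definition Qf :: "real^4 \<Rightarrow> real^4 \<Rightarrow> real" where
  "Qf x v = 2 * x$3 * ((v$0)^2 + (v$1)^2 - (v$2)^2)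
     + 4 * v$3 * (x$0 * v$0 + x$1 * v$1 - x$2 * v$2) - 6 * x$3 * (v$3)^2"

lemma quad_hess: "quad_form (hessian f5 x) v = Qf x v"
  unfolding quad_form_def hessian_f5 matrix_vector_mult_def inner_vec_def
  by (simp add: sum4 hf_def Qf_def algebra_simps power2_eq_square)

lemma quad_neg: "quad_form (- A) v = - quad_form A v"
  unfolding quad_form_def by (simp add: matrix_vector_mult_def inner_vec_def sum_negf sum_distrib_left)



lemma KI_id:
  fixes a b d p q s :: real
  shows "d^2 * ((a*p+b*q-d* s)^2 + (d^2-a^2-b^2)*(p^2+q^2-s^2)) =
     (d^2-a^2-b^2)*((d*p-a* s)^2+(d*q-b* s)^2) + (a*(d*p-a* s)+b*(d*q-b* s))^2"
  by (simp add: algebra_simps power2_eq_square)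

lemma KI:
  fixes a b d p q s c :: real
  assumes c: "c > 0" and r: "a^2+b^2-d^2+3*c^2 < 0" and nz: "p \<noteq> 0 \<or> q \<noteq> 0 \<or> s \<noteq> 0"
  shows "3*c^2*(p^2+q^2-s^2) + (a*p+b*q-d* s)^2 > 0"
proof -
  define T where "T = d^2-a^2-b^2"
  define m where "m = a*p+b*q-d* s"
  define L where "L = p^2+q^2-s^2"
  have T: "T > 3*c^2" using r by (simp add: T_def)
  have c2: "c^2 > 0" using c by simp
  have T0: "T > 0" using T c2 by linarith
  have d: "d \<noteq> 0"
  proof
    assume "d = 0"
    then have "a^2+b^2+3*c^2 < 0" using r by simp
    moreover have "a^2+b^2+3*c^2 \<ge> 0" by (intro add_nonneg_nonneg) auto
    ultimately show False by simp
  qed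
  have d2: "d^2 > 0" using d by simp
  have id: "d^2 * (m^2 + T*L) = T*((d*p-a* s)^2+(d*q-b* s)^2) + (a*(d*p-a* s)+b*(d*q-b* s))^2"
    unfolding m_def T_def L_def by (rule KI_id)
  have nn: "d^2 * (m^2 + T*L) \<ge> 0" unfolding id using T0 by (intro add_nonneg_nonneg mult_nonneg_nonneg) auto
  then have nn': "m^2 + T*L \<ge> 0" using d2 by (simp add: zero_le_mult_iff)
  consider "L > 0" | "L < 0" | "L = 0" by linarith
  then show ?thesis
  proof cases
    case 1 then show ?thesis using c2 by (simp add: L_def[symmetric] m_def[symmetric] add_pos_nonneg)
  next
    case 2
    have "(T - 3*c^2) * L < 0" using 2 T by (simp add: mult_pos_neg)
    then show ?thesis using nn' by (simp add: L_def[symmetric] m_def[symmetric] algebra_simps)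
  next
    case 3
    have "m \<noteq> 0"
    proof
      assume m0: "m = 0"
      have "T*((d*p-a* s)^2+(d*q-b* s)^2) + (a*(d*p-a* s)+b*(d*q-b* s))^2 = 0"
        using id m0 3 by simp
      then have "T*((d*p-a* s)^2+(d*q-b* s)^2) = 0"
        using T0 by (smt (verit) mult_nonneg_nonneg zero_le_power2)
      then have "(d*p-a* s)^2+(d*q-b* s)^2 = 0" using T0 by simp
      then have e1: "d*p = a* s" and e2: "d*q = b* s" by (simp_all add: sum_power2_eq_zero_iff)
      have "d^2 * L = (d*p)^2 + (d*q)^2 - d^2* s^2" by (simp add: L_def algebra_simps power2_eq_square)
      also have "\<dots> = - T * s^2" by (simp add: e1 e2 T_def algebra_simps power2_eq_square)
      finally have "T * s^2 = 0" using 3 by simp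
      then have "s = 0" using T0 by simp
      then have "p = 0" "q = 0" using e1 e2 d by simp_all
      then show False using nz \<open>s = 0\<close> by simp
    qed
    then show ?thesis using 3 by (simp add: L_def[symmetric] m_def[symmetric])
  qed
qed



definition mk4 :: "real \<Rightarrow> real \<Rightarrow> real \<Rightarrow> real \<Rightarrow> real^4" where
  "mk4 a b c d = (\<chi> i. if i = 0 then a else if i = 1 then b else if i = 2 then c else d)"

lemma mk4_nth [simp]: "mk4 a b c d $ 0 = a" "mk4 a b c d $ 1 = b" "mk4 a b c d $ 2 = c" "mk4 a b c d $ 3 = d"
  by (simp_all add: mk4_def)

lemma vec4_eq: "(v::real^4) = w \<longleftrightarrow> v$0 = w$0 \<and> v$1 = w$1 \<and> v$2 = w$2 \<and> v$3 = w$3"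
proof -
  have h: "(4::4) = 0" by simp
  show ?thesis unfolding vec_eq_iff forall_4 h by auto
qed

lemma inner4: "(v::real^4) \<bullet> w = v$0 * w$0 + v$1 * w$1 + v$2 * w$2 + v$3 * w$3"
  by (simp add: inner_vec_def sum4)

lemma dim_disj4:
  fixes V W :: "(real^4) set"
  assumes "subspace V" "subspace W" "V \<inter> W \<subseteq> {0}"
  shows "dim V + dim W \<le> 4"
proof -
  have "dim {x + y |x y. x \<in> V \<and> y \<in> W} + dim (V \<inter> W) = dim V + dim W"
    by (rule dim_sums_Int) fact+
  moreover have "dim (V \<inter> W) = 0" using assms(3) by simp
  moreover have "dim {x + y |x y. x \<in> V \<and> y \<in> W} \<le> CARD(4)" by (rule dim_subset_UNIV_cart)
  ultimately show ?thesis by simp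
qed

lemma dim_span2:
  fixes a b :: "real^4"
  assumes "a \<noteq> 0" "b \<noteq> 0" "a \<bullet> b = 0"
  shows "dim (span {a, b}) = 2"
proof -
  have ab: "a \<noteq> b" using assms by auto
  have "independent {a, b}"
    by (rule pairwise_orthogonal_independent) (use assms in \<open>auto simp: pairwise_def orthogonal_def inner_commute\<close>)
  then have "dim (span {a, b}) = card {a, b}" by (rule dim_span_eq_card_independent)
  then show ?thesis using ab by simp
qed

lemma dim_span1:
  fixes a :: "real^4"
  assumes "a \<noteq> 0"
  shows "dim (span {a}) = 1"
proof -
  have "independent {a}"
    by (rule pairwise_orthogonal_independent) (use assms in \<open>auto simp: pairwise_def\<close>)
  then have "dim (span {a}) = card {a}" by (rule dim_span_eq_card_independent)
  then show ?thesis by simp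
qed

lemma Qf_e3: "Qf x (k *\<^sub>R axis 3 1) = - 6 * x$3 * k^2"
  by (simp add: Qf_def axis_def)

lemma sig_fwd:
  fixes x :: "real^4"
  assumes x3: "x$3 < 0" and r: "(x$0)^2+(x$1)^2-(x$2)^2+3*(x$3)^2 < 0"
  shows "has_signature (hessian f5 x) 1 3"
proof -
  define h where "h = mk4 (2*x$0) (2*x$1) (-2*x$2) (-6*x$3)"
  define W where "W = {v. h \<bullet> v = 0}"
  have h0: "h \<noteq> 0" using x3 by (auto simp: h_def vec4_eq)
  have dimW: "dim W = 3" using dim_hyperplane[OF h0] by (simp add: W_def)
  have subW: "subspace W" unfolding W_def by (rule subspace_hyperplane)
  have negW: "Qf x v < 0" if v: "v \<in> W" "v \<noteq> 0" for v
  proof -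
    have hv: "2*x$0* v$0 + 2*x$1* v$1 - 2*x$2* v$2 - 6*x$3* v$3 = 0"
      using v(1) by (simp add: W_def h_def inner4)
    have nz: "v$0 \<noteq> 0 \<or> v$1 \<noteq> 0 \<or> v$2 \<noteq> 0"
    proof (rule ccontr)
      assume "\<not> ?thesis"
      then have "v$0 = 0" "v$1 = 0" "v$2 = 0" by auto
      moreover then have "v$3 = 0" using hv x3 by simp
      ultimately show False using v(2) by (simp add: vec4_eq)
    qed
    have c: "- x$3 > 0" using x3 by simp
    have r': "(x$0)^2+(x$1)^2-(x$2)^2+3*(- x$3)^2 < 0" using r by simp
    have K: "3*(- x$3)^2*((v$0)^2+(v$1)^2-(v$2)^2) + (x$0* v$0+x$1* v$1-x$2* v$2)^2 > 0"
      by (rule KI[OF c r' nz])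
    have m: "x$0* v$0+x$1* v$1-x$2* v$2 = 3*x$3* v$3" using hv by simp
    have "3*(x$3)^2*(((v$0)^2+(v$1)^2-(v$2)^2) + 3*(v$3)^2) > 0"
      using K unfolding m by (simp add: algebra_simps power2_eq_square)
    then have pos: "((v$0)^2+(v$1)^2-(v$2)^2) + 3*(v$3)^2 > 0"
      by (simp add: zero_less_mult_iff)
    have "Qf x v = 2 * x$3 * (((v$0)^2+(v$1)^2-(v$2)^2) + 3*(v$3)^2)"
      unfolding Qf_def m by (simp add: algebra_simps power2_eq_square)
    then show ?thesis using pos x3 by (simp add: mult_neg_pos)
  qed
  define E where "E = span {axis 3 1 :: real^4}"
  have e30: "(axis 3 1 :: real^4) \<noteq> 0" by (simp add: axis_eq_0_iff)
  have dimE: "dim E = 1" unfolding E_def by (rule dim_span1[OF e30])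
  have subE: "subspace E" unfolding E_def by simp
  have posE: "Qf x v > 0" if vE: "v \<in> E" and vnz: "v \<noteq> 0" for v
  proof -
    obtain k where k: "v = k *\<^sub>R axis 3 1" using vE by (auto simp: E_def span_singleton)
    then have "k \<noteq> 0" using vnz by auto
    then show ?thesis unfolding k Qf_e3 using x3 by (simp add: mult_neg_pos)
  qed
  have p1: "pos_index (hessian f5 x) 1"
    unfolding pos_index_def quad_hess
  proof (intro conjI exI allI impI)
    show "subspace E" "dim E = 1" by fact+
    show "\<forall>v\<in>E. v \<noteq> 0 \<longrightarrow> 0 < Qf x v" using posE by blast
  next
    fix V :: "(real^4) set"
    assume V: "subspace V \<and> (\<forall>v\<in>V. v \<noteq> 0 \<longrightarrow> 0 < Qf x v)"
    have "V \<inter> W \<subseteq> {0}" using V negW by force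
    then have "dim V + dim W \<le> 4" using dim_disj4 V subW by blast
    then show "dim V \<le> 1" using dimW by simp
  qed
  have p3: "pos_index (- hessian f5 x) 3"
    unfolding pos_index_def quad_neg quad_hess
  proof (intro conjI exI allI impI)
    show "subspace W" "dim W = 3" by fact+
    show "\<forall>v\<in>W. v \<noteq> 0 \<longrightarrow> 0 < - Qf x v" using negW by auto
  next
    fix V :: "(real^4) set"
    assume V: "subspace V \<and> (\<forall>v\<in>V. v \<noteq> 0 \<longrightarrow> 0 < - Qf x v)"
    have "V \<inter> E \<subseteq> {0}" using V posE by force
    then have "dim V + dim E \<le> 4" using dim_disj4 V subE by blast
    then show "dim V \<le> 3" using dimE by simp
  qed
  show ?thesis unfolding has_signature_def using p1 p3 by simp
qed



lemma u_choice:
  fixes a b d c :: real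
  assumes "a^2+b^2-d^2+3*c^2 \<ge> 0"
  shows "\<exists>p q s. (p \<noteq> 0 \<or> q \<noteq> 0 \<or> s \<noteq> 0) \<and> 3*c^2*(p^2+q^2-s^2) + (a*p+b*q-d* s)^2 \<le> 0"
proof -
  define S where "S = a^2+b^2-d^2"
  consider "S > 0" | "S \<le> 0" "a \<noteq> 0 \<or> b \<noteq> 0 \<or> d \<noteq> 0" | "a = 0" "b = 0" "d = 0" by force
  then show ?thesis
  proof cases
    case 1
    have ab: "a^2+b^2 > 0" using 1 unfolding S_def
      by (smt (verit) zero_le_power2)
    have m: "a*(d*a)+b*(d*b)-d*(a^2+b^2) = 0" by (simp add: algebra_simps power2_eq_square)
    have L: "(d*a)^2+(d*b)^2-(a^2+b^2)^2 = - (a^2+b^2) * S"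
      by (simp add: S_def algebra_simps power2_eq_square)
    have "(a^2+b^2) * S \<ge> 0" using ab 1 by simp
    then have "- (a^2+b^2) * S \<le> 0" by linarith
    then have "3*c^2*((d*a)^2+(d*b)^2-(a^2+b^2)^2) + (a*(d*a)+b*(d*b)-d*(a^2+b^2))^2 \<le> 0"
      unfolding m L by (simp add: mult_nonneg_nonpos)
    then show ?thesis using ab by (intro exI[of _ "d*a"] exI[of _ "d*b"] exI[of _ "a^2+b^2"]) auto
  next
    case 2
    have e: "3*c^2*(a^2+b^2-d^2) + (a*a+b*b-d*d)^2 = S * (S + 3*c^2)"
      by (simp add: S_def algebra_simps power2_eq_square)
    have "S * (S + 3*c^2) \<le> 0" using 2 assms by (simp add: S_def mult_nonpos_nonneg)
    then show ?thesis using 2 e by (intro exI[of _ a] exI[of _ b] exI[of _ d]) auto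
  next
    case 3
    then show ?thesis by (intro exI[of _ 0] exI[of _ 0] exI[of _ 1]) auto
  qed
qed

lemma sig_conv:
  fixes x :: "real^4"
  assumes sig: "has_signature (hessian f5 x) 1 3" and f1: "f5 x = 1"
  shows "x$3 < 0 \<and> (x$0)^2+(x$1)^2-(x$2)^2+3*(x$3)^2 < 0"
proof -
  have p1: "\<forall>V. subspace V \<and> (\<forall>v\<in>V. v \<noteq> 0 \<longrightarrow> 0 < Qf x v) \<longrightarrow> dim V \<le> 1"
    using sig unfolding has_signature_def pos_index_def quad_hess by blast
  obtain N where N: "subspace N" "dim N = 3" "\<forall>v\<in>N. v \<noteq> 0 \<longrightarrow> 0 < - Qf x v"
    using sig unfolding has_signature_def pos_index_def quad_hess quad_neg by blast
  have x30: "x$3 \<noteq> 0" using f1 by (auto simp: f5_def)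
  have x3: "x$3 < 0"
  proof (rule ccontr)
    assume "\<not> x$3 < 0"
    then have pos: "x$3 > 0" using x30 by simp
    define V where "V = span {axis 0 1, axis 1 1 :: real^4}"
    have "dim V = 2" unfolding V_def by (rule dim_span2) (auto simp: axis_eq_0_iff inner_axis_axis)
    moreover have "subspace V" unfolding V_def by simp
    moreover have "\<forall>v\<in>V. v \<noteq> 0 \<longrightarrow> 0 < Qf x v"
    proof (intro ballI impI)
      fix v assume vV: "v \<in> V" and vnz: "v \<noteq> 0"
      obtain k t where kt: "v - k *\<^sub>R axis 0 1 = t *\<^sub>R axis 1 1"
        using vV unfolding V_def span_breakdown_eq by (auto simp: span_singleton)
      have v: "v = k *\<^sub>R axis 0 1 + t *\<^sub>R axis 1 1" using kt by (simp add: algebra_simps)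
      have "k \<noteq> 0 \<or> t \<noteq> 0" using vnz v by auto
      then have "k^2 + t^2 > 0" by (simp add: sum_power2_gt_zero_iff)
      moreover have "Qf x v = 2 * x$3 * (k^2 + t^2)" unfolding v by (simp add: Qf_def axis_def)
      ultimately show "0 < Qf x v" using pos by simp
    qed
    ultimately show False using p1 by fastforce
  qed
  have "(x$0)^2+(x$1)^2-(x$2)^2+3*(x$3)^2 < 0"
  proof (rule ccontr)
    assume "\<not> ?thesis"
    then have "(x$0)^2+(x$1)^2-(x$2)^2+3*(- x$3)^2 \<ge> 0" by simp
    from u_choice[OF this] obtain p q s where pqs: "p \<noteq> 0 \<or> q \<noteq> 0 \<or> s \<noteq> 0"
      and ineq: "3*(- x$3)^2*(p^2+q^2-s^2) + (x$0*p+x$1*q-x$2* s)^2 \<le> 0" by blast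
    define c where "c = - x$3"
    have c: "c > 0" using x3 by (simp add: c_def)
    define w where "w = mk4 p q s 0"
    define W2 where "W2 = span {axis 3 1, w}"
    have w0: "w \<noteq> 0" using pqs by (auto simp: w_def vec4_eq)
    have dW2: "dim W2 = 2" unfolding W2_def
      by (rule dim_span2) (simp add: axis_eq_0_iff, rule w0, simp add: w_def inner4 axis_def)
    have sW2: "subspace W2" unfolding W2_def by simp
    have nnW2: "Qf x z \<ge> 0" if zW: "z \<in> W2" for z
    proof -
      obtain k t where kt: "z - k *\<^sub>R axis 3 1 = t *\<^sub>R w"
        using zW unfolding W2_def span_breakdown_eq by (auto simp: span_singleton)
      have z: "z = k *\<^sub>R axis 3 1 + t *\<^sub>R w" using kt by (simp add: algebra_simps)
      define m where "m = x$0*p+x$1*q-x$2* s"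
      define L where "L = p^2+q^2-s^2"
      have ineq': "m^2 + 3*c^2*L \<le> 0" using ineq by (simp add: m_def L_def c_def)
      have "3*c*Qf x z = 2*(3*c*k + t*m)^2 - 2*t^2*(m^2 + 3*c^2*L)"
        unfolding z by (simp add: Qf_def w_def axis_def m_def L_def c_def algebra_simps power2_eq_square)
      also have "\<dots> \<ge> 0" using ineq' by (smt (verit) mult_nonneg_nonpos zero_le_power2)
      finally have "3*c*Qf x z \<ge> 0" .
      then show ?thesis using c by (simp add: zero_le_mult_iff)
    qed
    have "N \<inter> W2 \<subseteq> {0}" using N(3) nnW2 by force
    then have "dim N + dim W2 \<le> 4" using dim_disj4 N(1) sW2 by blast
    then show False using N(2) dW2 by simp
  qed
  then show ?thesis using x3 by simp
qed



definition rr :: "real \<Rightarrow> real" where "rr c = sqrt (1/c - c^2)"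
definition drr :: "real \<Rightarrow> real" where "drr c = (- 1/c^2 - 2*c) / (2 * rr c)"

definition phi :: "real \<Rightarrow> real^3 \<Rightarrow> real^4" where
  "phi \<sigma> u = (\<chi> k. if k = 0 then rr (u$0) * (u$1 / u$2)
     else if k = 1 then rr (u$0) * (((u$1)^2 + (u$2)^2 - 1) / (2 * u$2))
     else if k = 2 then \<sigma> * rr (u$0) * (((u$1)^2 + (u$2)^2 + 1) / (2 * u$2))
     else - (u$0))"

lemma phi_nth [simp]:
  "phi \<sigma> u $ 0 = rr (u$0) * (u$1 / u$2)"
  "phi \<sigma> u $ 1 = rr (u$0) * (((u$1)^2 + (u$2)^2 - 1) / (2 * u$2))"
  "phi \<sigma> u $ 2 = \<sigma> * rr (u$0) * (((u$1)^2 + (u$2)^2 + 1) / (2 * u$2))"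
  "phi \<sigma> u $ 3 = - (u$0)"
  by (simp_all add: phi_def)

definition U0 :: "(real^3) set" where
  "U0 = {u. 0 < u$0 \<and> 4 * (u$0)^3 < 1 \<and> 0 < u$2}"

lemma open_U0: "open U0"
  unfolding U0_def
  by (intro open_Collect_conj open_Collect_less continuous_intros)

lemma c_lt1: assumes "0 < c" "4 * c^3 < (1::real)" shows "c < 1"
proof (rule ccontr)
  assume "\<not> c < 1"
  then have "1 \<le> c^3" using assms by (simp add: one_le_power)
  then show False using assms by simp
qed

lemma P_pos: assumes "0 < c" "4 * c^3 < (1::real)" shows "1/c - c^2 > 0"
proof -
  have "c < 1" using c_lt1 assms by blast
  then have "c^3 < 1" using assms by (simp add: power_less_one_iff)
  then have "c * c^2 < 1" by (simp add: power3_eq_cube power2_eq_square)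
  then show ?thesis using assms by (simp add: field_simps)
qed

lemma rr_sq: assumes "0 < c" "4 * c^3 < (1::real)" shows "(rr c)^2 = 1/c - c^2"
  using P_pos[OF assms] by (simp add: rr_def)

lemma rr_pos: assumes "0 < c" "4 * c^3 < (1::real)" shows "rr c > 0"
  using P_pos[OF assms] by (simp add: rr_def)

lemma rr_deriv:
  assumes "0 < c" "4 * c^3 < (1::real)"
  shows "(rr has_real_derivative drr c) (at c)"
proof -
  have p: "1/c - c^2 > 0" by (rule P_pos[OF assms])
  have "((\<lambda>c. sqrt (1/c - c^2)) has_real_derivative inverse (sqrt (1/c - c^2)) / 2 * (- 1/c^2 - 2*c)) (at c)"
    by (rule DERIV_chain2[where g="\<lambda>c. 1/c - c^2", OF DERIV_real_sqrt[OF p]])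
       (use assms in \<open>auto intro!: derivative_eq_intros simp: power2_eq_square field_simps\<close>)
  then show ?thesis unfolding rr_def[abs_def] drr_def by (simp add: field_simps)
qed



definition Jm :: "real \<Rightarrow> 4 \<Rightarrow> 3 \<Rightarrow> real^3 \<Rightarrow> real" where
  "Jm \<sigma> k i u = (let c = u$0; X = u$1; Y = u$2; r = rr c; d = drr c in
     if k = 0 then (if i = 0 then d * (X / Y) else if i = 1 then r / Y else - r * X / Y^2)
     else if k = 1 then (if i = 0 then d * ((X^2 + Y^2 - 1) / (2 * Y)) else if i = 1 then r * X / Y
                         else r * (Y^2 - X^2 + 1) / (2 * Y^2))
     else if k = 2 then (if i = 0 then \<sigma> * d * ((X^2 + Y^2 + 1) / (2 * Y)) else if i = 1 then \<sigma> * r * X / Y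
                         else \<sigma> * r * (Y^2 - X^2 - 1) / (2 * Y^2))
     else (if i = 0 then -1 else 0))"

lemma jac_phi:
  assumes u: "u \<in> U0"
  shows "jac (phi \<sigma>) k i u = Jm \<sigma> k i u"
proof -
  have c: "0 < u$0" "4 * (u$0)^3 < 1" and Y: "0 < u$2" using u by (auto simp: U0_def)
  have rd: "(rr has_real_derivative drr (u$0)) (at (u$0))" by (rule rr_deriv[OF c])
  show ?thesis
    unfolding jac_def
    by (cases k rule: cases4; cases i rule: cases3; (rule partial_upd);
        use Y in \<open>auto simp: Jm_def Let_def intro!: derivative_eq_intros rd\<close>;
        simp add: field_simps power2_eq_square)
qed



definition Ag :: "real \<Rightarrow> real" where "Ag c = (1 - 4*c^3) / (4*c^2*(1 - c^3))"
definition Bg :: "real \<Rightarrow> real" where "Bg c = (1 - c^3) / 3"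

definition Gm :: "3 \<Rightarrow> 3 \<Rightarrow> real^3 \<Rightarrow> real" where
  "Gm i j u = (if i = j then (if i = 0 then Ag (u$0) else Bg (u$0) / (u$2)^2) else 0)"

lemma drr_rel: assumes "0 < c" "4 * c^3 < (1::real)" shows "2*c^2*rr c*drr c = -(1 + 2*c^3)"
  using rr_pos[OF assms] assms by (simp add: drr_def field_simps power2_eq_square power3_eq_cube)

lemma rr_rel: assumes "0 < c" "4 * c^3 < (1::real)" shows "c * (rr c)^2 = 1 - c^3"
  using rr_sq[OF assms] assms by (simp add: field_simps power2_eq_square power3_eq_cube)

lemma gmet_sum:
  assumes u: "u \<in> U0"
  shows "gmet 3 f5 (phi \<sigma>) i j u = - (1/6) * (\<Sum>k\<in>UNIV. \<Sum>l\<in>UNIV. hf k l (phi \<sigma> u) * Jm \<sigma> k i u * Jm \<sigma> l j u)"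
  unfolding gmet_def hessian_f5 jac_phi[OF u] by simp

lemma g00:
  assumes u: "u \<in> U0" and s: "\<sigma>^2 = 1"
  shows "gmet 3 f5 (phi \<sigma>) 0 0 u = Gm 0 0 u"
proof -
  have c: "0 < u$0" "4 * (u$0)^3 < 1" and Y: "0 < u$2" using u by (auto simp: U0_def)
  have c1: "1 - (u$0)^3 \<noteq> 0" using c by auto
  have h1: "2*(u$0)^2*rr (u$0)*drr (u$0) = -(1 + 2*(u$0)^3)" by (rule drr_rel[OF c])
  have h2: "u$0 * (rr (u$0))^2 = 1 - (u$0)^3" by (rule rr_rel[OF c])
  have r: "rr (u$0) > 0" by (rule rr_pos[OF c])
  show ?thesis unfolding gmet_sum[OF u]
    apply (simp add: sum4 hf_def Jm_def Let_def Gm_def Ag_def)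
    apply (rule eq_divide_imp)
    using c c1 apply simp
    using Y
    apply (simp add: field_simps)
    using h1 h2 s
    apply algebra
    done
qed

lemma gmet_phi:
  assumes u: "u \<in> U0" and s: "\<sigma>^2 = 1"
  shows "gmet 3 f5 (phi \<sigma>) i j u = Gm i j u"
proof -
  have c: "0 < u$0" "4 * (u$0)^3 < 1" and Y: "0 < u$2" using u by (auto simp: U0_def)
  have h1: "2*(u$0)^2*rr (u$0)*drr (u$0) = -(1 + 2*(u$0)^3)" by (rule drr_rel[OF c])
  have h2: "u$0 * (rr (u$0))^2 = 1 - (u$0)^3" by (rule rr_rel[OF c])
  have Y0: "u$2 \<noteq> 0" using Y by simp
  have g01: "gmet 3 f5 (phi \<sigma>) 0 1 u = Gm 0 1 u"
    unfolding gmet_sum[OF u]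
    apply (simp add: sum4 hf_def Jm_def Let_def Gm_def Bg_def)
    apply (simp add: Y0 field_simps)
    using h1 h2 s by algebra
  have g02: "gmet 3 f5 (phi \<sigma>) 0 2 u = Gm 0 2 u"
    unfolding gmet_sum[OF u]
    apply (simp add: sum4 hf_def Jm_def Let_def Gm_def Bg_def)
    apply (simp add: Y0 field_simps)
    using h1 h2 s by algebra
  have g10: "gmet 3 f5 (phi \<sigma>) 1 0 u = Gm 1 0 u"
    unfolding gmet_sum[OF u]
    apply (simp add: sum4 hf_def Jm_def Let_def Gm_def Bg_def)
    apply (simp add: Y0 field_simps)
    using h1 h2 s by algebra
  have g11: "gmet 3 f5 (phi \<sigma>) 1 1 u = Gm 1 1 u"
    unfolding gmet_sum[OF u]
    apply (simp add: sum4 hf_def Jm_def Let_def Gm_def Bg_def)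
    apply (simp add: Y0 field_simps)
    using h1 h2 s by algebra
  have g12: "gmet 3 f5 (phi \<sigma>) 1 2 u = Gm 1 2 u"
    unfolding gmet_sum[OF u]
    apply (simp add: sum4 hf_def Jm_def Let_def Gm_def Bg_def)
    apply (simp add: Y0 field_simps)
    using h1 h2 s by algebra
  have g20: "gmet 3 f5 (phi \<sigma>) 2 0 u = Gm 2 0 u"
    unfolding gmet_sum[OF u]
    apply (simp add: sum4 hf_def Jm_def Let_def Gm_def Bg_def)
    apply (simp add: Y0 field_simps)
    using h1 h2 s by algebra
  have g21: "gmet 3 f5 (phi \<sigma>) 2 1 u = Gm 2 1 u"
    unfolding gmet_sum[OF u]
    apply (simp add: sum4 hf_def Jm_def Let_def Gm_def Bg_def)
    apply (simp add: Y0 field_simps)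
    using h1 h2 s by algebra
  have g22: "gmet 3 f5 (phi \<sigma>) 2 2 u = Gm 2 2 u"
    unfolding gmet_sum[OF u]
    apply (simp add: sum4 hf_def Jm_def Let_def Gm_def Bg_def)
    apply (simp add: Y0 field_simps)
    using h1 h2 s by algebra
  note gs = g01 g02 g10 g11 g12 g20 g21 g22 g00[OF u s]
  show ?thesis by (cases i rule: cases3; cases j rule: cases3) (use gs in simp_all)
qed



definition dAg :: "real \<Rightarrow> real" where
  "dAg c = (- (48 * (c^4 * (1 - c^3))) - (1 - 4 * c^3) * (8 * c * (1 - c^3) - 12 * c^4)) /
     (16 * (c^2 * ((1 - c^3) * (c^2 * (1 - c^3)))))"

definition DG :: "3 \<Rightarrow> 3 \<Rightarrow> 3 \<Rightarrow> real^3 \<Rightarrow> real" where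
  "DG i j k u = (if i \<noteq> j then 0 else if i = 0 then (if k = 0 then dAg (u$0) else 0)
     else (if k = 0 then - ((u$0)^2) / (u$2)^2 else if k = 2 then - 2 * Bg (u$0) / (u$2)^3 else 0))"

lemma Ag_deriv:
  assumes "0 < c" "4 * c^3 < (1::real)"
  shows "(Ag has_real_derivative dAg c) (at c)"
proof -
  have c1: "c < 1" using c_lt1[OF assms] .
  have "c^3 < 1" using c1 assms by (simp add: power_less_one_iff)
  then have nz: "1 - c^3 \<noteq> 0" "1 - 4*c^3 \<noteq> 0" "c \<noteq> 0" using assms by auto
  show ?thesis
    unfolding Ag_def[abs_def] dAg_def
    using nz
    by (auto intro!: derivative_eq_intros)
qed

lemma partial_Gm:
  assumes u: "u \<in> U0"
  shows "partial (Gm i j) k u = DG i j k u"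
proof -
  have c: "0 < u$0" "4 * (u$0)^3 < 1" and Y: "0 < u$2" using u by (auto simp: U0_def)
  have ad: "(Ag has_real_derivative dAg (u$0)) (at (u$0))" by (rule Ag_deriv[OF c])
  show ?thesis
    by (cases i rule: cases3; cases j rule: cases3; cases k rule: cases3; (rule partial_upd);
        use Y in \<open>auto simp: Gm_def DG_def Bg_def intro!: derivative_eq_intros ad\<close>;
        simp add: field_simps eval_nat_numeral)
qed



lemma matrix_inv_diag:
  fixes a :: "'n::finite \<Rightarrow> real"
  assumes nz: "\<forall>i. a i \<noteq> 0"
  shows "matrix_inv ((\<chi> i j. if i = j then a i else 0) :: real^'n^'n) = (\<chi> i j. if i = j then 1 / a i else 0)"
proof -
  define D :: "real^'n^'n" where "D = (\<chi> i j. if i = j then a i else 0)"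
  define B :: "real^'n^'n" where "B = (\<chi> i j. if i = j then 1 / a i else 0)"
  have DBe: "(D ** B) $ i $ j = (if i = j then 1 else 0)" for i j
  proof -
    have "(D ** B) $ i $ j = (\<Sum>k\<in>UNIV. if k = i then (if k = j then a k * (1 / a k) else 0) else 0)"
      unfolding D_def B_def matrix_matrix_mult_def vec_lambda_beta by (intro sum.cong) auto
    also have "\<dots> = (if i = j then 1 else 0)" using nz by simp
    finally show ?thesis .
  qed
  have BDe: "(B ** D) $ i $ j = (if i = j then 1 else 0)" for i j
  proof -
    have "(B ** D) $ i $ j = (\<Sum>k\<in>UNIV. if k = i then (if k = j then (1 / a k) * a k else 0) else 0)"
      unfolding D_def B_def matrix_matrix_mult_def vec_lambda_beta by (intro sum.cong) auto
    also have "\<dots> = (if i = j then 1 else 0)" using nz by simp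
    finally show ?thesis .
  qed
  have DB: "D ** B = mat 1" by (simp add: vec_eq_iff DBe mat_def)
  have BD: "B ** D = mat 1" by (simp add: vec_eq_iff BDe mat_def)
  have uniq: "A' = B" if "D ** A' = mat 1 \<and> A' ** D = mat 1" for A'
  proof -
    have "A' = A' ** (D ** B)" by (simp add: DB)
    also have "\<dots> = (A' ** D) ** B" by (simp add: matrix_mul_assoc)
    also have "\<dots> = B" using that by simp
    finally show ?thesis .
  qed
  have "matrix_inv D = B"
    unfolding matrix_inv_def by (rule some_equality) (use DB BD uniq in blast)+
  then show ?thesis by (simp add: D_def B_def)
qed

lemma Ag_pos: assumes "0 < c" "4 * c^3 < (1::real)" shows "Ag c > 0"
proof -
  have "c^3 < 1" using c_lt1[OF assms] assms by (simp add: power_less_one_iff)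
  then show ?thesis using assms unfolding Ag_def by (intro divide_pos_pos) auto
qed

lemma Bg_pos: assumes "0 < c" "4 * c^3 < (1::real)" shows "Bg c > 0"
proof -
  have "c^3 < 1" using c_lt1[OF assms] assms by (simp add: power_less_one_iff)
  then show ?thesis unfolding Bg_def by simp
qed

lemma Gm_diag_nz:
  assumes u: "u \<in> U0" shows "Gm i i u \<noteq> 0"
proof -
  have c: "0 < u$0" "4 * (u$0)^3 < 1" and Y: "0 < u$2" using u by (auto simp: U0_def)
  show ?thesis using Ag_pos[OF c] Bg_pos[OF c] Y by (auto simp: Gm_def)
qed

lemma ginv_phi:
  assumes u: "u \<in> U0" and s: "\<sigma>^2 = 1"
  shows "ginv 3 f5 (phi \<sigma>) u = (\<chi> i j. if i = j then 1 / Gm i i u else 0)"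
proof -
  have "(\<chi> i j. gmet 3 f5 (phi \<sigma>) i j u) = (\<chi> i j. if i = j then Gm i i u else 0)"
    by (simp add: vec_eq_iff gmet_phi[OF u s] Gm_def)
  then show ?thesis unfolding ginv_def using matrix_inv_diag[of "\<lambda>i. Gm i i u"] Gm_diag_nz[OF u] by simp
qed

lemma pgmet:
  assumes u: "u \<in> U0" and s: "\<sigma>^2 = 1"
  shows "partial (gmet 3 f5 (phi \<sigma>) i j) k u = DG i j k u"
proof -
  have "partial (gmet 3 f5 (phi \<sigma>) i j) k u = partial (Gm i j) k u"
    by (rule partial_local[OF open_U0 u]) (use gmet_phi[OF _ s] in auto)
  then show ?thesis using partial_Gm[OF u] by simp
qed

definition CH :: "3 \<Rightarrow> 3 \<Rightarrow> 3 \<Rightarrow> real^3 \<Rightarrow> real" where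
  "CH k i j u = (1/2) * (1 / Gm k k u) * (DG j k i u + DG i k j u - DG i j k u)"

lemma christ_phi:
  assumes u: "u \<in> U0" and s: "\<sigma>^2 = 1"
  shows "christoffel 3 f5 (phi \<sigma>) k i j u = CH k i j u"
  unfolding christoffel_def ginv_phi[OF u s] pgmet[OF u s] CH_def
  by (cases k rule: cases3) (simp_all add: sum3)



lemma riem_phi:
  assumes u: "u \<in> U0" and s: "\<sigma>^2 = 1"
  shows "riemann 3 f5 (phi \<sigma>) 0 0 1 1 u = partial (CH 0 1 1) 0 u - partial (CH 0 0 1) 1 u
     + (\<Sum>p\<in>UNIV. CH 0 0 p u * CH p 1 1 u - CH 0 1 p u * CH p 0 1 u)"
proof -
  have "partial (christoffel 3 f5 (phi \<sigma>) 0 1 1) 0 u = partial (CH 0 1 1) 0 u"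
    by (rule partial_local[OF open_U0 u]) (use christ_phi[OF _ s] in auto)
  moreover have "partial (christoffel 3 f5 (phi \<sigma>) 0 0 1) 1 u = partial (CH 0 0 1) 1 u"
    by (rule partial_local[OF open_U0 u]) (use christ_phi[OF _ s] in auto)
  ultimately show ?thesis unfolding riemann_def christ_phi[OF u s] by simp
qed

lemma CH001: "CH 0 0 1 = (\<lambda>u. 0)"
  by (rule ext) (simp add: CH_def DG_def)

lemma pCH001: "partial (CH 0 0 1) 1 u = 0"
  unfolding CH001 partial_def by simp

lemma pCH011:
  assumes u: "u \<in> U0"
  shows "partial (CH 0 1 1) 0 u = (u$0 / Ag (u$0) - (u$0)^2 * dAg (u$0) / (2 * (Ag (u$0))^2)) / (u$2)^2"
proof -
  have c: "0 < u$0" "4 * (u$0)^3 < 1" and Y: "0 < u$2" using u by (auto simp: U0_def)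
  have ad: "(Ag has_real_derivative dAg (u$0)) (at (u$0))" by (rule Ag_deriv[OF c])
  have A0: "Ag (u$0) \<noteq> 0" using Ag_pos[OF c] by simp
  show ?thesis
    apply (rule partial_upd)
    apply (simp add: CH_def DG_def Gm_def)
    using A0 Y apply (auto intro!: derivative_eq_intros ad)
    apply (simp add: field_simps power2_eq_square)
    done
qed

lemma sum_CH:
  assumes u: "u \<in> U0"
  shows "(\<Sum>p\<in>UNIV. CH 0 0 p u * CH p 1 1 u - CH 0 1 p u * CH p 0 1 u) =
    (dAg (u$0) * (u$0)^2 / (4 * (Ag (u$0))^2) + (u$0)^4 / (4 * Ag (u$0) * Bg (u$0))) / (u$2)^2"
proof -
  have c: "0 < u$0" "4 * (u$0)^3 < 1" and Y: "0 < u$2" using u by (auto simp: U0_def)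
  have A0: "Ag (u$0) \<noteq> 0" using Ag_pos[OF c] by simp
  have B0: "Bg (u$0) \<noteq> 0" using Bg_pos[OF c] by simp
  show ?thesis
    apply (simp add: sum3 CH_def DG_def Gm_def)
    using Y A0 B0 apply (simp add: field_simps power2_eq_square eval_nat_numeral)
    done
qed

lemma sec_phi:
  assumes u: "u \<in> U0" and s: "\<sigma>^2 = 1"
  shows "sectional_curv 3 f5 (phi \<sigma>) u (axis 0 1) (axis 1 1) =
    Ag (u$0) * riemann 3 f5 (phi \<sigma>) 0 0 1 1 u / (Ag (u$0) * (Bg (u$0) / (u$2)^2))"
  unfolding sectional_curv_def ginner_def
  apply (simp add: sum3 axis_def)
  apply (simp add: gmet_phi[OF u s] Gm_def)
  done

lemma dAg_neg: assumes "0 < c" "4 * c^3 < (1::real)" shows "dAg c < 0"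
proof -
  have c3: "c^3 < 1" using c_lt1[OF assms] assms by (simp add: power_less_one_iff)
  have num: "- (48 * (c^4 * (1 - c^3))) - (1 - 4 * c^3) * (8 * c * (1 - c^3) - 12 * c^4)
      = 4 * c * (c^3 - 2 - 8 * c^6)"
    by (simp add: algebra_simps eval_nat_numeral)
  have "c^6 = (c^3)^2" by (simp flip: power_mult)
  then have "c^6 \<ge> 0" by simp
  then have "c^3 - 2 - 8 * c^6 < 0" using c3 by linarith
  then have "4 * c * (c^3 - 2 - 8 * c^6) < 0" using assms by (simp add: mult_pos_neg)
  moreover have "16 * (c^2 * ((1 - c^3) * (c^2 * (1 - c^3)))) > 0" using assms c3 by simp
  ultimately show ?thesis unfolding dAg_def num by (simp add: divide_neg_pos)
qed

lemma sec_pos: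
  assumes u: "u \<in> U0" and s: "\<sigma>^2 = 1"
  shows "sectional_curv 3 f5 (phi \<sigma>) u (axis 0 1) (axis 1 1) > 0"
proof -
  have c: "0 < u$0" "4 * (u$0)^3 < 1" and Y: "0 < u$2" using u by (auto simp: U0_def)
  define A where "A = Ag (u$0)"
  define B where "B = Bg (u$0)"
  define D where "D = dAg (u$0)"
  define C where "C = u$0"
  have A: "A > 0" using Ag_pos[OF c] by (simp add: A_def)
  have B: "B > 0" using Bg_pos[OF c] by (simp add: B_def)
  have D: "D < 0" using dAg_neg[OF c] by (simp add: D_def)
  have C: "C > 0" using c by (simp add: C_def)
  have R: "riemann 3 f5 (phi \<sigma>) 0 0 1 1 u = (C / A - C^2 * D / (2 * A^2) + (D * C^2 / (4 * A^2) + C^4 / (4 * A * B))) / (u$2)^2"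
    unfolding riem_phi[OF u s] pCH001 pCH011[OF u] sum_CH[OF u]
    by (simp add: A_def B_def C_def D_def add_divide_distrib diff_divide_distrib)
  have "C / A - C^2 * D / (2 * A^2) + (D * C^2 / (4 * A^2) + C^4 / (4 * A * B))
      = C / A + C^2 * (- D) / (4 * A^2) + C^4 / (4 * A * B)"
    using A by (simp add: field_simps power2_eq_square)
  also have "\<dots> > 0" using A B C D by (intro add_pos_pos divide_pos_pos mult_pos_pos) auto
  finally have Rp: "riemann 3 f5 (phi \<sigma>) 0 0 1 1 u > 0" unfolding R using Y by simp
  show ?thesis unfolding sec_phi[OF u s] using Rp A B Y
    by (simp add: A_def B_def)
qed



lemma U0_facts:
  assumes u: "u \<in> U0"
  shows "0 < u$0" "4 * (u$0)^3 < 1" "0 < u$2" "rr (u$0) > 0" "u$0 * (rr (u$0))^2 = 1 - (u$0)^3"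
proof -
  have c: "0 < u$0" "4 * (u$0)^3 < 1" and Y: "0 < u$2" using u by (auto simp: U0_def)
  show "0 < u$0" "4 * (u$0)^3 < 1" "0 < u$2" by fact+
  show "rr (u$0) > 0" by (rule rr_pos[OF c])
  show "u$0 * (rr (u$0))^2 = 1 - (u$0)^3" by (rule rr_rel[OF c])
qed

lemma phi_S:
  assumes u: "u \<in> U0" and s: "\<sigma>^2 = 1"
  shows "(phi \<sigma> u $ 0)^2 + (phi \<sigma> u $ 1)^2 - (phi \<sigma> u $ 2)^2 = - ((rr (u$0))^2)"
proof -
  have Y: "u$2 \<noteq> 0" using U0_facts[OF u] by simp
  show ?thesis
    apply (simp add: power_divide power_mult_distrib)
    using Y apply (simp add: field_simps)
    using s apply algebra
    done
qed

lemma phi_f5: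
  assumes u: "u \<in> U0" and s: "\<sigma>^2 = 1"
  shows "f5 (phi \<sigma> u) = 1"
proof -
  note F = U0_facts[OF u]
  have "f5 (phi \<sigma> u) = (- ((rr (u$0))^2) - (u$0)^2) * (- u$0)"
    unfolding f5_def phi_S[OF u s, symmetric] by simp
  also have "\<dots> = u$0 * (rr (u$0))^2 + (u$0)^3" by (simp add: algebra_simps power2_eq_square power3_eq_cube)
  also have "\<dots> = 1" using F(5) by simp
  finally show ?thesis .
qed

lemma phi_region:
  assumes u: "u \<in> U0" and s: "\<sigma>^2 = 1"
  shows "phi \<sigma> u $ 3 < 0 \<and> (phi \<sigma> u $ 0)^2 + (phi \<sigma> u $ 1)^2 - (phi \<sigma> u $ 2)^2 + 3 * (phi \<sigma> u $ 3)^2 < 0"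
proof -
  note F = U0_facts[OF u]
  have "(u$0) * (- ((rr (u$0))^2) + 3 * (u$0)^2) = 4 * (u$0)^3 - 1"
    using F(5) by (simp add: algebra_simps power2_eq_square power3_eq_cube)
  also have "\<dots> < 0" using F(2) by simp
  finally have "- ((rr (u$0))^2) + 3 * (u$0)^2 < 0" using F(1) by (simp add: mult_less_0_iff)
  then show ?thesis unfolding phi_S[OF u s] using F(1) by simp
qed

lemma phi_M5:
  assumes u: "u \<in> U0" and s: "\<sigma>^2 = 1"
  shows "phi \<sigma> u \<in> M5"
  using phi_f5[OF u s] sig_fwd[of "phi \<sigma> u"] phi_region[OF u s]
  unfolding M5_def index_cone_def by simp

lemma sm_rr: "(\<lambda>u. rr (u$0)) \<in> sm U0"
proof -
  have e: "(\<lambda>u. rr (u$0)) = (\<lambda>u. sqrt (inverse (u$0) + (-1) * (u$0 * u$0)))"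
    by (rule ext) (simp add: rr_def divide_inverse power2_eq_square)
  have p: "\<forall>u\<in>U0. inverse (u$0) + (-1) * (u$0 * u$0) > 0"
    using P_pos by (auto simp: U0_def divide_inverse power2_eq_square)
  have a: "(\<lambda>u. inverse (u$0)) \<in> sm U0" by (rule sm_inv[OF sm_coord]) (auto simp: U0_def)
  have b: "(\<lambda>u. (-1) * (u$0 * u$0)) \<in> sm U0" by (rule sm_mult[OF sm_const sm_mult[OF sm_coord sm_coord]])
  have "(\<lambda>u. inverse (u$0) + (-1) * (u$0 * u$0)) \<in> sm U0" by (rule sm_add[OF a b])
  then show ?thesis unfolding e using p by (rule sm_sqrt)
qed

lemma sm_div: "F \<in> sm U \<Longrightarrow> G \<in> sm U \<Longrightarrow> \<forall>u\<in>U. G u \<noteq> 0 \<Longrightarrow> (\<lambda>u. F u / G u) \<in> sm U"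
proof -
  assume F: "F \<in> sm U" and G: "G \<in> sm U" and nz: "\<forall>u\<in>U. G u \<noteq> 0"
  have e: "(\<lambda>u. F u / G u) = (\<lambda>u. F u * inverse (G u))" by (rule ext) (simp only: divide_inverse)
  show ?thesis unfolding e by (rule sm_mult[OF F sm_inv[OF G nz]])
qed

lemma sm_pow2: "F \<in> sm U \<Longrightarrow> (\<lambda>u. (F u)^2) \<in> sm U"
proof -
  assume F: "F \<in> sm U"
  have e: "(\<lambda>u. (F u)^2) = (\<lambda>u. F u * F u)" by (rule ext) (simp only: power2_eq_square)
  show ?thesis unfolding e by (rule sm_mult[OF F F])
qed

lemma sm_neg: "F \<in> sm U \<Longrightarrow> (\<lambda>u. - F u) \<in> sm U"
proof -
  assume F: "F \<in> sm U"
  have e: "(\<lambda>u. - F u) = (\<lambda>u. (-1) * F u)" by (rule ext) simp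
  show ?thesis unfolding e by (rule sm_mult[OF sm_const F])
qed

lemma sm_diff: "F \<in> sm U \<Longrightarrow> G \<in> sm U \<Longrightarrow> (\<lambda>u. F u - G u) \<in> sm U"
proof -
  assume F: "F \<in> sm U" and G: "G \<in> sm U"
  have e: "(\<lambda>u. F u - G u) = (\<lambda>u. F u + - G u)" by (rule ext) simp
  show ?thesis unfolding e by (rule sm_add[OF F sm_neg[OF G]])
qed

lemma sm_phi: "(\<lambda>u. phi \<sigma> u $ k) \<in> sm U0"
proof -
  have Y: "\<forall>u\<in>U0. u$2 \<noteq> 0" "\<forall>u\<in>U0. 2 * u$2 \<noteq> 0" by (auto simp: U0_def)
  have d2: "(\<lambda>u. 2 * u$2) \<in> sm U0" by (rule sm_mult[OF sm_const sm_coord])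
  have q: "(\<lambda>u. (u$1)^2 + (u$2)^2) \<in> sm U0" by (rule sm_add[OF sm_pow2[OF sm_coord] sm_pow2[OF sm_coord]])
  have q1: "(\<lambda>u. (u$1)^2 + (u$2)^2 - 1) \<in> sm U0" by (rule sm_diff[OF q sm_const])
  have q2: "(\<lambda>u. (u$1)^2 + (u$2)^2 + 1) \<in> sm U0" by (rule sm_add[OF q sm_const])
  show ?thesis
  proof (cases k rule: cases4)
    case 1
    have eq: "(\<lambda>u. phi \<sigma> u $ k) = (\<lambda>u. rr (u$0) * (u$1 / u$2))" by (simp add: 1)
    show ?thesis unfolding eq by (rule sm_mult[OF sm_rr sm_div[OF sm_coord sm_coord Y(1)]])
  next
    case 2
    have eq: "(\<lambda>u. phi \<sigma> u $ k) = (\<lambda>u. rr (u$0) * (((u$1)^2 + (u$2)^2 - 1) / (2 * u$2)))" by (simp add: 2)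
    show ?thesis unfolding eq by (rule sm_mult[OF sm_rr sm_div[OF q1 d2 Y(2)]])
  next
    case 3
    have eq: "(\<lambda>u. phi \<sigma> u $ k) = (\<lambda>u. \<sigma> * rr (u$0) * (((u$1)^2 + (u$2)^2 + 1) / (2 * u$2)))" by (simp add: 3)
    show ?thesis unfolding eq by (rule sm_mult[OF sm_mult[OF sm_const sm_rr] sm_div[OF q2 d2 Y(2)]])
  next
    case 4
    have eq: "(\<lambda>u. phi \<sigma> u $ k) = (\<lambda>u. - (u$0))" by (simp add: 4)
    show ?thesis unfolding eq by (rule sm_neg[OF sm_coord])
  qed
qed



definition mk3 :: "real \<Rightarrow> real \<Rightarrow> real \<Rightarrow> real^3" where
  "mk3 a b c = (\<chi> i. if i = 0 then a else if i = 1 then b else c)"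

lemma mk3_nth [simp]: "mk3 a b c $ 0 = a" "mk3 a b c $ 1 = b" "mk3 a b c $ 2 = c"
  by (simp_all add: mk3_def)

lemma vec3_eq: "(v::real^3) = w \<longleftrightarrow> v$0 = w$0 \<and> v$1 = w$1 \<and> v$2 = w$2"
proof -
  have h: "(3::3) = 0" by simp
  show ?thesis unfolding vec_eq_iff forall_3 h by auto
qed

lemma phi_diff:
  assumes u: "u \<in> U0" and s: "\<sigma>^2 = 1"
  shows "\<sigma> * (phi \<sigma> u $ 2) - phi \<sigma> u $ 1 = rr (u$0) / u$2"
proof -
  have Y: "u$2 \<noteq> 0" using U0_facts[OF u] by simp
  show ?thesis
    apply simp
    using Y apply (simp add: field_simps)
    using s apply algebra
    done
qed

lemma phi_inj:
  assumes s: "\<sigma>^2 = 1"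
  shows "inj_on (phi \<sigma>) U0"
proof (rule inj_onI)
  fix u v assume u: "u \<in> U0" and v: "v \<in> U0" and e: "phi \<sigma> u = phi \<sigma> v"
  have c: "u$0 = v$0" using arg_cong[OF e, of "\<lambda>x. x $ 3"] by simp
  have r: "rr (u$0) > 0" using U0_facts[OF u] by simp
  have Yu: "u$2 > 0" and Yv: "v$2 > 0" using U0_facts[OF u] U0_facts[OF v] by simp_all
  have "rr (u$0) / u$2 = rr (v$0) / v$2"
    using phi_diff[OF u s] phi_diff[OF v s] e by metis
  then have Y: "u$2 = v$2" using r Yu Yv c by (simp add: field_simps)
  have "rr (u$0) * (u$1 / u$2) = rr (v$0) * (v$1 / v$2)"
    using arg_cong[OF e, of "\<lambda>x. x $ 0"] by simp
  then have X: "u$1 = v$1" using r Yu Y c by (simp add: field_simps)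
  show "u = v" using c X Y by (simp add: vec3_eq)
qed

lemma phi_onto:
  assumes s: "\<sigma>^2 = 1" and x3: "x$3 < 0" and x3b: "4 * (- x$3)^3 < 1" and x2: "0 < \<sigma> * x$2"
    and f: "f5 x = 1"
  shows "\<exists>u\<in>U0. phi \<sigma> u = x"
proof -
  define c where "c = - x$3"
  have c: "0 < c" "4 * c^3 < 1" using x3 x3b by (simp_all add: c_def)
  define r where "r = rr c"
  have r: "r > 0" using rr_pos[OF c] by (simp add: r_def)
  have r2: "c * r^2 = 1 - c^3" using rr_rel[OF c] by (simp add: r_def)
  have fe: "((x$0)^2 + (x$1)^2 - (x$2)^2 - c^2) * (- c) = 1" using f by (simp add: f5_def c_def)
  have S: "(x$0)^2 + (x$1)^2 - (x$2)^2 = - (r^2)"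
  proof -
    have "c * ((x$0)^2 + (x$1)^2 - (x$2)^2) = c * (- (r^2))"
      using fe r2 by (simp add: algebra_simps power2_eq_square power3_eq_cube)
    then show ?thesis using c(1) by (metis mult_cancel_left less_irrefl)
  qed
  define z where "z = \<sigma> * x$2"
  have z: "z > 0" using x2 by (simp add: z_def)
  have z2: "z^2 = (x$2)^2" using s by (simp add: z_def power_mult_distrib)
  define D where "D = z - x$1"
  have D: "D > 0"
  proof (rule ccontr)
    assume "\<not> D > 0"
    then have "z \<le> x$1" by (simp add: D_def)
    then have "z^2 \<le> (x$1)^2" using z by (simp add: power_mono)
    moreover have "z^2 - (x$1)^2 = (x$0)^2 + r^2" using S z2 by simp
    moreover have "(x$0)^2 + r^2 > 0" using r by (simp add: add_nonneg_pos)
    ultimately show False by simp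
  qed
  define u where "u = mk3 c (x$0 / D) (r / D)"
  have uU: "u \<in> U0" using c r D by (simp add: U0_def u_def)
  have ru: "rr (u$0) = r" by (simp add: u_def r_def)
  have D0: "D \<noteq> 0" and r0: "r \<noteq> 0" using D r by simp_all
  have e0: "phi \<sigma> u $ 0 = x$0" unfolding phi_nth ru using D0 r0 by (simp add: u_def field_simps)
  have e1: "phi \<sigma> u $ 1 = x$1" unfolding phi_nth ru
    apply (simp add: u_def power_divide)
    using D0 r0 apply (simp add: field_simps)
    using S s D_def z_def apply algebra
    done
  have e2: "phi \<sigma> u $ 2 = x$2" unfolding phi_nth ru
    apply (simp add: u_def power_divide)
    using D0 r0 apply (simp add: field_simps)
    using S s D_def z_def apply algebra
    done
  have e3: "phi \<sigma> u $ 3 = x$3" by (simp add: u_def c_def)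
  show ?thesis using uU e0 e1 e2 e3 by (auto simp: vec4_eq)
qed



lemma phi_imm:
  assumes u: "u \<in> U0" and s: "\<sigma>^2 = 1"
    and z: "(\<Sum>i\<in>UNIV. (v $ i) *\<^sub>R (\<chi> k. jac (phi \<sigma>) k i u)) = 0"
  shows "v = 0"
proof -
  note F = U0_facts[OF u]
  have Y: "u$2 \<noteq> 0" using F by simp
  have r: "rr (u$0) \<noteq> 0" using F by simp
  have comp: "(\<Sum>i\<in>UNIV. v $ i * Jm \<sigma> k i u) = 0" for k
  proof -
    have "(\<Sum>i\<in>UNIV. (v $ i) *\<^sub>R (\<chi> k. jac (phi \<sigma>) k i u)) $ k = 0" using z by simp
    then show ?thesis by (simp add: sum3 jac_phi[OF u])
  qed
  have E3: "v$0 = 0" using comp[of 3] by (simp add: sum3 Jm_def)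
  have E0: "v$1 * (rr (u$0) / u$2) - v$2 * (rr (u$0) * u$1 / (u$2)^2) = 0"
    using comp[of 0] E3 by (simp add: sum3 Jm_def Let_def)
  have E1: "v$1 * (rr (u$0) * u$1 / u$2) + v$2 * (rr (u$0) * ((u$2)^2 - (u$1)^2 + 1) / (2 * (u$2)^2)) = 0"
    using comp[of 1] E3 by (simp add: sum3 Jm_def Let_def)
  have E2: "v$1 * (\<sigma> * rr (u$0) * u$1 / u$2) + v$2 * (\<sigma> * rr (u$0) * ((u$2)^2 - (u$1)^2 - 1) / (2 * (u$2)^2)) = 0"
    using comp[of 2] E3 by (simp add: sum3 Jm_def Let_def)
  have "\<sigma> * (v$1 * (\<sigma> * rr (u$0) * u$1 / u$2) + v$2 * (\<sigma> * rr (u$0) * ((u$2)^2 - (u$1)^2 - 1) / (2 * (u$2)^2)))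
      - (v$1 * (rr (u$0) * u$1 / u$2) + v$2 * (rr (u$0) * ((u$2)^2 - (u$1)^2 + 1) / (2 * (u$2)^2)))
      = - (v$2 * rr (u$0) / (u$2)^2)"
    using Y apply (simp add: field_simps)
    using s apply algebra
    done
  then have "v$2 * rr (u$0) / (u$2)^2 = 0" using E1 E2 by simp
  then have E4: "v$2 = 0" using Y r by simp
  then have "v$1 = 0" using E0 Y r by simp
  then show ?thesis using E3 E4 by (simp add: vec3_eq)
qed

definition Wset :: "real \<Rightarrow> (real^4) set" where
  "Wset \<sigma> = {x. x$3 < 0 \<and> 4 * (- x$3)^3 < 1 \<and> 0 < \<sigma> * x$2}"

lemma open_Wset: "open (Wset \<sigma>)"
  unfolding Wset_def by (intro open_Collect_conj open_Collect_less continuous_intros)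

lemma phi_in_W:
  assumes u: "u \<in> U0" and s: "\<sigma>^2 = 1"
  shows "phi \<sigma> u \<in> Wset \<sigma>"
proof -
  note F = U0_facts[OF u]
  have "\<sigma> * (phi \<sigma> u $ 2) = \<sigma>^2 * rr (u$0) * (((u$1)^2 + (u$2)^2 + 1) / (2 * u$2))"
    by (simp add: power2_eq_square)
  also have "\<dots> > 0" using s F by (intro mult_pos_pos divide_pos_pos add_nonneg_pos) auto
  finally show ?thesis using F by (simp add: Wset_def)
qed

lemma local_param_phi:
  assumes s: "\<sigma>^2 = 1"
  shows "local_param M5 U0 (phi \<sigma>)"
  unfolding local_param_def
proof (intro conjI allI ballI impI)
  show "open U0" by (rule open_U0)
  fix k show "smooth_on U0 (\<lambda>u. phi \<sigma> u $ k)" by (rule sm_smooth[OF open_U0 sm_phi])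
next
  show "phi \<sigma> ` U0 \<subseteq> M5" using phi_M5[OF _ s] by auto
next
  show "inj_on (phi \<sigma>) U0" by (rule phi_inj[OF s])
next
  show "\<exists>W. open W \<and> phi \<sigma> ` U0 = W \<inter> M5"
  proof (intro exI conjI)
    show "open (Wset \<sigma>)" by (rule open_Wset)
    show "phi \<sigma> ` U0 = Wset \<sigma> \<inter> M5"
    proof
      show "phi \<sigma> ` U0 \<subseteq> Wset \<sigma> \<inter> M5" using phi_M5[OF _ s] phi_in_W[OF _ s] by auto
      show "Wset \<sigma> \<inter> M5 \<subseteq> phi \<sigma> ` U0"
      proof
        fix x assume x: "x \<in> Wset \<sigma> \<inter> M5"
        then have "f5 x = 1" by (simp add: M5_def)
        then obtain u where "u \<in> U0" "phi \<sigma> u = x"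
          using phi_onto[OF s] x by (auto simp: Wset_def)
        then show "x \<in> phi \<sigma> ` U0" by auto
      qed
    qed
  qed
next
  fix u v assume "u \<in> U0" "(\<Sum>i\<in>UNIV. (v $ i) *\<^sub>R (\<chi> k. jac (phi \<sigma>) k i u)) = 0"
  then show "v = 0" using phi_imm[OF _ s] by blast
qed



lemma M5_W:
  assumes p: "p \<in> M5"
  shows "\<exists>\<sigma>. \<sigma>^2 = 1 \<and> p \<in> Wset \<sigma>"
proof -
  have f: "f5 p = 1" and sig: "has_signature (hessian f5 p) 1 3"
    using p by (simp_all add: M5_def index_cone_def)
  from sig_conv[OF sig f] have x3: "p$3 < 0" and r: "(p$0)^2+(p$1)^2-(p$2)^2+3*(p$3)^2 < 0" by auto
  define c where "c = - p$3"
  have c: "c > 0" using x3 by (simp add: c_def)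
  define S where "S = (p$0)^2+(p$1)^2-(p$2)^2"
  have fe: "(S - c^2) * (- c) = 1" using f by (simp add: f5_def c_def S_def)
  have r': "S + 3 * c^2 < 0" using r by (simp add: S_def c_def)
  have "c * (S + 3 * c^2) < 0" using r' c by (simp add: mult_pos_neg)
  moreover have "c * (S + 3 * c^2) = 4 * c^3 - 1" using fe by (simp add: algebra_simps power2_eq_square power3_eq_cube)
  ultimately have c3: "4 * c^3 < 1" by simp
  have "S < 0" using r' by (smt (verit) zero_le_power2)
  then have "(p$2)^2 > 0" unfolding S_def by (smt (verit) zero_le_power2)
  then have p2: "p$2 \<noteq> 0" by auto
  define \<sigma> where "\<sigma> = (if p$2 > 0 then 1 else -1 :: real)"
  have s: "\<sigma>^2 = 1" by (simp add: \<sigma>_def)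
  have "0 < \<sigma> * p$2" using p2 by (simp add: \<sigma>_def)
  then have "p \<in> Wset \<sigma>" using x3 c3 by (simp add: Wset_def c_def)
  then show ?thesis using s by blast
qed

lemma axes_indep: "independent {axis 0 1, axis 1 1 :: real^3}"
  by (rule pairwise_orthogonal_independent)
     (auto simp: pairwise_def orthogonal_def inner_axis_axis axis_eq_0_iff axis_eq_axis)

theorem lemma5p1:
  shows "index_cone f5 \<noteq> {} \<and>
    (\<forall>p\<in>M5. \<exists>(U :: (real^3) set) \<phi> u0 a b.
        local_param M5 U \<phi> \<and> u0 \<in> U \<and> \<phi> u0 = p \<and>
        independent {a, b} \<and> a \<noteq> b \<and> sectional_curv 3 f5 \<phi> u0 a b > 0)"
proof (intro conjI ballI)
  have s1: "(1::real)^2 = 1" by simp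
  have u1: "mk3 (1/2) 0 1 \<in> U0" by (simp add: U0_def power3_eq_cube)
  have "phi 1 (mk3 (1/2) 0 1) \<in> M5" by (rule phi_M5[OF u1 s1])
  then show "index_cone f5 \<noteq> {}" by (auto simp: M5_def)
next
  fix p assume p: "p \<in> M5"
  obtain \<sigma> where s: "\<sigma>^2 = 1" and pW: "p \<in> Wset \<sigma>" using M5_W[OF p] by blast
  have f: "f5 p = 1" using p by (simp add: M5_def)
  obtain u0 where u0: "u0 \<in> U0" "phi \<sigma> u0 = p"
    using phi_onto[OF s _ _ _ f] pW by (auto simp: Wset_def)
  have ab: "axis 0 1 \<noteq> (axis 1 1 :: real^3)" by (simp add: axis_eq_axis)
  show "\<exists>(U :: (real^3) set) \<phi> u0 a b.
        local_param M5 U \<phi> \<and> u0 \<in> U \<and> \<phi> u0 = p \<and>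
        independent {a, b} \<and> a \<noteq> b \<and> sectional_curv 3 f5 \<phi> u0 a b > 0"
    using local_param_phi[OF s] u0 axes_indep ab sec_pos[OF u0(1) s] by blast
qed


end
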